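(* For every $q>1$, the sketch $q$-$\mathsf{LL}$ is weakly scale-invariant with base $q$, and $\mathcal{H}(q\text{-}\mathsf{LL})=\phi(q)/\ln q$ and $\mathcal{I}(q\text{-}\mathsf{LL})=\rho(q)/\ln q$.
   Context: A sketch is described by its induced distribution family: for each cardinality $\lambda>0$, a distribution $\psi_\lambda$ on a countable state space; $X_\lambda\sim\psi_\lambda$. Entropy $H(X_\lambda)=-\sum_x\psi_\lambda(x)\log_2\psi_\lambda(x)$, Fisher information $I(\lambda)=\sum_x(\frac{\partial}{\partial\lambda}\psi_\lambda(x))^2/\psi_\lambda(x)$. Weakly scale-invariant with base $q>1$ means: for all $\lambda>0$, $H(X_\lambda)=H(X_{q\lambda})$ and $I(\lambda)=q^2I(q\lambda)$. Then $\mathcal{H}=\int_0^1H(X_{q^r})\,dr$ and $\mathcal{I}=\int_0^1 q^{2r}I(q^r)\,dr$. The sketch $q$-$\mathsf{LL}$ has state space $\mathbb Z$ and $\psi_\lambda(k)=e^{-\lambda/q^k}-e^{-\lambda/q^{k-1}}$. $\phi(q)=\int_{-\infty}^\infty -\big(e^{-e^r}-e^{-qe^r}\big)\log_2\big(e^{-e^r}-e^{-qe^r}\big)\,dr$, $\rho(q)=\int_{-\infty}^\infty \frac{\left(-e^re^{-e^r}+qe^re^{-qe^r}\right)^2}{e^{-e^r}-e^{-qe^r}}\,dr$. *)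

theory Defs
  imports "HOL-Analysis.Analysis"
begin

text \<open>A sketch is given by its induced distribution family
  psi :: real => 'a => real  (psi lam x = probability of state x at cardinality lam),
  on a countable state space 'a.\<close>

definition entropy :: "(real \<Rightarrow> 'a \<Rightarrow> real) \<Rightarrow> real \<Rightarrow> real" where
  "entropy psi lam = (\<Sum>\<^sub>\<infinity>x. - psi lam x * log 2 (psi lam x))"

definition fisher :: "(real \<Rightarrow> 'a \<Rightarrow> real) \<Rightarrow> real \<Rightarrow> real" where
  "fisher psi lam = (\<Sum>\<^sub>\<infinity>x. (deriv (\<lambda>l. psi l x) lam)\<^sup>2 / psi lam x)"

definition weakly_scale_invariant :: "(real \<Rightarrow> 'a \<Rightarrow> real) \<Rightarrow> real \<Rightarrow> bool" where
  "weakly_scale_invariant psi q \<longleftrightarrow> q > 1 \<and>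
     (\<forall>lam>0. entropy psi lam = entropy psi (q * lam) \<and>
              fisher psi lam = q\<^sup>2 * fisher psi (q * lam))"

definition scaled_entropy :: "(real \<Rightarrow> 'a \<Rightarrow> real) \<Rightarrow> real \<Rightarrow> real" where
  "scaled_entropy psi q = integral {0..1} (\<lambda>r. entropy psi (q powr r))"

definition scaled_fisher :: "(real \<Rightarrow> 'a \<Rightarrow> real) \<Rightarrow> real \<Rightarrow> real" where
  "scaled_fisher psi q = integral {0..1} (\<lambda>r. q powr (2 * r) * fisher psi (q powr r))"

definition qLL :: "real \<Rightarrow> real \<Rightarrow> int \<Rightarrow> real" where
  "qLL q lam k = exp (- lam / q powr (real_of_int k)) - exp (- lam / q powr (real_of_int k - 1))"

definition phi_integrand :: "real \<Rightarrow> real \<Rightarrow> real" where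
  "phi_integrand q r = - (exp (- exp r) - exp (- q * exp r)) * log 2 (exp (- exp r) - exp (- q * exp r))"

definition rho_integrand :: "real \<Rightarrow> real \<Rightarrow> real" where
  "rho_integrand q r = (- exp r * exp (- exp r) + q * exp r * exp (- q * exp r))\<^sup>2
                        / (exp (- exp r) - exp (- q * exp r))"

definition phi :: "real \<Rightarrow> real" where
  "phi q = integral UNIV (phi_integrand q)"

definition rho :: "real \<Rightarrow> real" where
  "rho q = integral UNIV (rho_integrand q)"

end

theory Submission
  imports Defs
begin


definition Mj :: "real \<Rightarrow> real \<Rightarrow> int \<Rightarrow> real" where
  "Mj q lam k = (if 0 \<le> k then sqrt lam * (1 / sqrt q) ^ nat k else (1/q) ^ nat (-k) / lam)"

lemma Mj_has_sum:
  assumes q: "q > 1" and lam: "lam > 0"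
  shows "(Mj q lam has_sum (sqrt lam / (1 - 1 / sqrt q) + 1 / (lam * (q - 1)))) UNIV"
proof -
  have s1: "norm (1 / sqrt q) < 1" using q by (simp add: real_sqrt_gt_1_iff)
  have "(\<lambda>n. sqrt lam * (1 / sqrt q) ^ n) sums (sqrt lam * (1 / (1 - 1 / sqrt q)))"
    by (intro sums_mult geometric_sums s1)
  hence A: "((\<lambda>n. sqrt lam * (1 / sqrt q) ^ n) has_sum (sqrt lam / (1 - 1 / sqrt q))) UNIV"
    using q lam by (intro sums_nonneg_imp_has_sum) auto
  have q1: "norm (1 / q) < 1" using q by simp
  have "(\<lambda>n. (1/q) * (1/q) ^ n / lam) sums ((1/q) * (1 / (1 - 1 / q)) / lam)"
    by (intro sums_divide sums_mult geometric_sums q1)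
  moreover have "(1/q) * (1 / (1 - 1 / q)) / lam = 1 / (lam * (q - 1))"
    using q lam by (simp add: field_simps)
  ultimately have B: "((\<lambda>n. (1/q) * (1/q) ^ n / lam) has_sum (1 / (lam * (q - 1)))) UNIV"
    using q lam by (intro sums_nonneg_imp_has_sum) (auto simp: mult_ac)
  have A': "(Mj q lam has_sum (sqrt lam / (1 - 1 / sqrt q))) (int ` UNIV)"
    by (subst has_sum_reindex) (auto simp: o_def Mj_def A)
  have B': "(Mj q lam has_sum (1 / (lam * (q - 1)))) ((\<lambda>n. - int n - 1) ` UNIV)"
  proof (subst has_sum_reindex)
    show "inj_on (\<lambda>n. - int n - 1) UNIV" by (auto simp: inj_on_def)
    have e: "nat (1 + int n) = Suc n" for n by simp
    thus "((Mj q lam \<circ> (\<lambda>n. - int n - 1)) has_sum 1 / (lam * (q - 1))) UNIV"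
      using B by (simp add: o_def Mj_def e)
  qed
  have U: "int ` UNIV \<union> (\<lambda>n. - int n - 1) ` UNIV = (UNIV :: int set)"
  proof -
    have "k \<in> int ` UNIV \<union> (\<lambda>n. - int n - 1) ` UNIV" for k
    proof (cases "k \<ge> 0")
      case True thus ?thesis by (auto intro!: image_eqI[of _ _ "nat k"])
    next
      case False thus ?thesis by (auto intro!: image_eqI[of _ _ "nat (- k - 1)"])
    qed
    thus ?thesis by auto
  qed
  show ?thesis
    using has_sum_Un_disjoint[OF A' B'] U by fastforce
qed

lemma Mj_bound:
  assumes q: "q > 1" and lam: "lam > 0"
    and G1: "\<And>x. x > 0 \<Longrightarrow> G x \<le> C * sqrt x"
    and G2: "\<And>x. x > 0 \<Longrightarrow> G x \<le> C / x"
  shows "G (lam / q powr real_of_int k) \<le> C * Mj q lam k"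
proof (cases "0 \<le> k")
  case True
  have p: "q powr real_of_int k = q ^ nat k"
    using q True by (simp add: powr_realpow[symmetric])
  have "sqrt (lam / q powr real_of_int k) = sqrt lam * (1 / sqrt q) ^ nat k"
    by (simp add: p real_sqrt_divide real_sqrt_power power_divide)
  thus ?thesis using G1[of "lam / q powr real_of_int k"] True q lam by (simp add: Mj_def)
next
  case False
  have p: "q powr real_of_int k = 1 / q ^ nat (-k)"
    using q False by (simp add: powr_realpow[symmetric] powr_minus_divide[symmetric])
  have "C / (lam / q powr real_of_int k) = C * Mj q lam k"
    using False by (simp add: p power_divide Mj_def)
  thus ?thesis using G2[of "lam / q powr real_of_int k"] q lam by simp
qed

lemma G_summable:
  assumes q: "q > 1" and lam: "lam > 0"
    and G0: "\<And>x. x > 0 \<Longrightarrow> 0 \<le> G x"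
    and G1: "\<And>x. x > 0 \<Longrightarrow> G x \<le> C * sqrt x"
    and G2: "\<And>x. x > 0 \<Longrightarrow> G x \<le> C / x"
  shows "(\<lambda>k. G (lam / q powr real_of_int k)) summable_on UNIV"
    and "(\<Sum>\<^sub>\<infinity>k. G (lam / q powr real_of_int k)) \<le> C * (sqrt lam / (1 - 1 / sqrt q) + 1 / (lam * (q - 1)))"
proof -
  have hs: "((\<lambda>k. C * Mj q lam k) has_sum C * (sqrt lam / (1 - 1 / sqrt q) + 1 / (lam * (q - 1)))) UNIV"
    by (intro has_sum_cmult_right Mj_has_sum q lam)
  have pos: "lam / q powr real_of_int k > 0" for k using q lam by simp
  have hs': "(\<lambda>k. C * Mj q lam k) summable_on UNIV" using hs by (rule has_sum_imp_summable)
  show S: "(\<lambda>k. G (lam / q powr real_of_int k)) summable_on UNIV"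
  proof (rule summable_on_comparison_test[OF hs'])
    fix k :: int
    show "G (lam / q powr real_of_int k) \<le> C * Mj q lam k" by (rule Mj_bound[OF q lam G1 G2])
    show "0 \<le> G (lam / q powr real_of_int k)" by (rule G0[OF pos])
  qed
  have "(\<Sum>\<^sub>\<infinity>k. G (lam / q powr real_of_int k)) \<le> (\<Sum>\<^sub>\<infinity>k. C * Mj q lam k)"
  proof (rule infsum_mono[OF S hs'])
    fix k :: int
    show "G (lam / q powr real_of_int k) \<le> C * Mj q lam k" by (rule Mj_bound[OF q lam G1 G2])
  qed
  also have "\<dots> = C * (sqrt lam / (1 - 1 / sqrt q) + 1 / (lam * (q - 1)))"
    using hs by (rule infsumI)
  finally show "(\<Sum>\<^sub>\<infinity>k. G (lam / q powr real_of_int k)) \<le> C * (sqrt lam / (1 - 1 / sqrt q) + 1 / (lam * (q - 1)))" .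
qed

definition fdef :: "real \<Rightarrow> real \<Rightarrow> real" where
  "fdef q x = exp (- x) - exp (- (q * x))"
definition fd :: "real \<Rightarrow> real \<Rightarrow> real" where
  "fd q x = - exp (- x) + q * exp (- (q * x))"
definition gfun :: "real \<Rightarrow> real \<Rightarrow> real" where
  "gfun q x = - fdef q x * log 2 (fdef q x)"
definition Hfun :: "real \<Rightarrow> real \<Rightarrow> real" where
  "Hfun q x = (x * fd q x)\<^sup>2 / fdef q x"

lemma fdef_pos: "q > 1 \<Longrightarrow> x > 0 \<Longrightarrow> 0 < fdef q x"
  unfolding fdef_def by simp

lemma fdef_le_exp: "q > 1 \<Longrightarrow> x > 0 \<Longrightarrow> fdef q x \<le> exp (- x)"
  unfolding fdef_def by simp

lemma fdef_le_lin:
  assumes "q > 1" "x > 0" shows "fdef q x \<le> (q - 1) * x"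
proof -
  have e: "exp (- (q * x)) = exp (- x) * exp (- ((q - 1) * x))"
    by (simp add: exp_add[symmetric] algebra_simps)
  have "1 - (q-1) * x \<le> exp (- ((q - 1) * x))"
    using exp_ge_add_one_self[of "- ((q - 1) * x)"] by simp
  moreover have "exp (- ((q - 1) * x)) \<le> 1" using assms by simp
  moreover have "exp (- x) \<le> 1" "0 < exp (-x)" using assms by auto
  ultimately have "exp (- x) * (1 - exp (- ((q - 1) * x))) \<le> 1 * ((q - 1) * x)"
    by (intro mult_mono) auto
  thus ?thesis unfolding fdef_def e by (simp add: algebra_simps)
qed

lemma neg_xlnx_le: assumes "0 < p" shows "- p * ln p \<le> sqrt p"
proof -
  define u where "u = 1 / sqrt p"
  have u: "u > 0" using assms by (simp add: u_def)
  have "ln (u / 2) \<le> u / 2 - 1" using ln_le_minus_one[of "u/2"] u by simp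
  hence "ln u \<le> u / 2" using u ln_2_less_1 by (simp add: ln_div)
  moreover have "- ln p = 2 * ln u"
    using assms by (simp add: u_def ln_div ln_sqrt)
  ultimately have "- ln p \<le> 1 / sqrt p" by (simp add: u_def)
  hence "p * (- ln p) \<le> p * (1 / sqrt p)" using assms by (intro mult_left_mono) auto
  also have "p * (1 / sqrt p) = sqrt p"
    using real_div_sqrt[of p] assms by simp
  finally show ?thesis by simp
qed

lemma exp_half_bound: assumes "x > (0::real)" shows "exp (- x / 2) \<le> 2 / x"
proof -
  have "x / 2 \<le> exp (x / 2)" using exp_ge_add_one_self[of "x/2"] by linarith
  hence "1 / exp (x / 2) \<le> 1 / (x / 2)" using assms by (intro divide_left_mono) auto
  thus ?thesis by (simp add: exp_minus field_simps)
qed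

lemma sqrt_exp: "sqrt (exp (y::real)) = exp (y / 2)"
  by (rule real_sqrt_unique) (simp_all add: power2_eq_square exp_add[symmetric])

lemma gfun_bounds:
  assumes q: "q > 1" and x: "x > 0"
  shows "0 \<le> gfun q x" "gfun q x \<le> ((sqrt (q - 1) + 2) / ln 2) * sqrt x"
    "gfun q x \<le> ((sqrt (q - 1) + 2) / ln 2) / x"
proof -
  let ?f = "fdef q x"
  have f0: "0 < ?f" using fdef_pos q x .
  have f1: "?f \<le> 1" using fdef_le_exp[OF q x] x by (smt (verit) exp_le_one_iff)
  have g: "gfun q x = (- ?f * ln ?f) / ln 2" unfolding gfun_def log_def by simp
  have "ln ?f \<le> 0" using f0 f1 by simp
  hence "0 \<le> - ?f * ln ?f" using f0 by (simp add: mult_nonneg_nonpos)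
  thus "0 \<le> gfun q x" unfolding g by (intro divide_nonneg_pos) auto
  have gs: "gfun q x \<le> sqrt ?f / ln 2" unfolding g
    by (intro divide_right_mono neg_xlnx_le f0) simp
  have s1: "sqrt ?f \<le> sqrt (q - 1) * sqrt x"
    using fdef_le_lin[OF q x] by (simp add: real_sqrt_mult[symmetric])
  have s2: "sqrt ?f \<le> 2 / x"
  proof -
    have "sqrt ?f \<le> sqrt (exp (- x))" using fdef_le_exp[OF q x] by simp
    also have "\<dots> = exp (- x / 2)" by (simp add: sqrt_exp)
    also have "\<dots> \<le> 2 / x" by (rule exp_half_bound[OF x])
    finally show ?thesis .
  qed
  have l2: "ln (2::real) > 0" by simp
  have sx: "0 \<le> 2 * sqrt x" using x by simp
  have "sqrt ?f \<le> (sqrt (q - 1) + 2) * sqrt x" using s1 sx by (simp only: distrib_right)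
  hence "sqrt ?f / ln 2 \<le> ((sqrt (q - 1) + 2) * sqrt x) / ln 2"
    using l2 by (intro divide_right_mono) auto
  thus "gfun q x \<le> ((sqrt (q - 1) + 2) / ln 2) * sqrt x"
    using gs by simp
  have "2 / x \<le> (sqrt (q - 1) + 2) / x" using x q by (intro divide_right_mono) auto
  hence "sqrt ?f \<le> (sqrt (q - 1) + 2) / x" using s2 by linarith
  hence "sqrt ?f / ln 2 \<le> ((sqrt (q - 1) + 2) / x) / ln 2"
    using l2 by (intro divide_right_mono) auto
  also have "((sqrt (q - 1) + 2) / x) / ln 2 = ((sqrt (q - 1) + 2) / ln 2) / x"
    by simp
  finally show "gfun q x \<le> ((sqrt (q - 1) + 2) / ln 2) / x"
    using gs by simp
qed

lemma cube_le_exp: assumes "x \<ge> (0::real)" shows "x ^ 3 \<le> 27 * exp x"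
proof -
  have "x / 3 \<le> exp (x / 3)" using exp_ge_add_one_self[of "x/3"] by linarith
  hence "(x / 3) ^ 3 \<le> exp (x / 3) ^ 3" using assms by (intro power_mono) auto
  also have "exp (x / 3) ^ 3 = exp x" by (simp add: exp_of_nat_mult[symmetric])
  finally show ?thesis by (simp add: power_divide)
qed

lemma Hfun_main:
  assumes q: "q > 1" and x: "x > 0"
  shows "Hfun q x \<le> q\<^sup>2 * (exp (- x) * (x / (q - 1) + x\<^sup>2))"
proof -
  define y where "y = (q - 1) * x"
  define v where "v = exp (- y)"
  define e where "e = exp (- x)"
  have y: "y > 0" using q x by (simp add: y_def)
  have v0: "0 < v" "v < 1" using y by (auto simp: v_def)
  have e0: "0 < e" by (simp add: e_def)
  have eqx: "exp (- (q * x)) = e * v"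
    by (simp add: e_def v_def y_def exp_add[symmetric] algebra_simps)
  have F: "fdef q x = e * (1 - v)" by (simp add: fdef_def eqx algebra_simps e_def)
  have FD: "fd q x = e * (q * v - 1)" by (simp add: fd_def eqx algebra_simps e_def)
  have H: "Hfun q x = x\<^sup>2 * e * (q * v - 1)\<^sup>2 / (1 - v)"
    using e0 v0 by (simp add: Hfun_def F FD power2_eq_square field_simps)
  have w: "(q * v - 1)\<^sup>2 \<le> q\<^sup>2"
  proof -
    have "0 \<le> q * v" using q v0 by simp
    hence a: "- q \<le> q * v - 1" using q by linarith
    have "q * v \<le> q" using q v0 by (simp add: mult_le_cancel_left1)
    hence "q * v - 1 \<le> q" by linarith
    with a have "\<bar>q * v - 1\<bar> \<le> \<bar>q\<bar>" using q by linarith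
    thus ?thesis by (simp add: abs_le_square_iff)
  qed
  have vb: "v \<le> 1 / (1 + y)"
  proof -
    have "1 + y \<le> exp y" by simp
    hence "1 / exp y \<le> 1 / (1 + y)" using y by (intro divide_left_mono) auto
    thus ?thesis by (simp add: v_def exp_minus field_simps)
  qed
  have ub: "1 / (1 - v) \<le> (1 + y) / y"
  proof -
    have "y / (1 + y) \<le> 1 - v" using vb y by (simp add: field_simps)
    moreover have "0 < y / (1 + y)" using y by simp
    moreover have "0 < (1 - v) * (y / (1 + y))" using v0 y by (intro mult_pos_pos) auto
    ultimately have "1 / (1 - v) \<le> 1 / (y / (1 + y))"
      by (intro divide_left_mono) auto
    thus ?thesis by simp
  qed
  have "Hfun q x = (x\<^sup>2 * e) * (q * v - 1)\<^sup>2 * (1 / (1 - v))" by (simp add: H)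
  also have "\<dots> \<le> (x\<^sup>2 * e) * q\<^sup>2 * ((1 + y) / y)"
    using w ub e0 v0 by (intro mult_mono) auto
  also have "\<dots> = q\<^sup>2 * (e * (x / (q - 1) + x\<^sup>2))"
    using q x by (simp add: y_def field_simps power2_eq_square)
  finally show ?thesis by (simp add: e_def)
qed

lemma P_bounds:
  assumes q: "q > 1" and x: "x > 0"
  defines "A \<equiv> 1 / (q - 1) + 1"
  shows "exp (- x) * (x / (q - 1) + x\<^sup>2) \<le> 27 * A * sqrt x \<and>
         exp (- x) * (x / (q - 1) + x\<^sup>2) \<le> 27 * A / x"
proof -
  have "1 / (q - 1) > 0" using q by simp
  hence A0: "A > 0" unfolding A_def by linarith
  have e0: "0 < exp (- x)" by simp
  show ?thesis
  proof (cases "x \<le> 1")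
    case True
    have "x\<^sup>2 \<le> x" using True x by (simp add: power2_eq_square mult_le_cancel_right1)
    hence "x / (q - 1) + x\<^sup>2 \<le> A * x" using q by (simp add: A_def distrib_right)
    moreover have "exp (- x) \<le> 1" using x by simp
    moreover have "0 \<le> x / (q - 1) + x\<^sup>2" using x q by simp
    ultimately have "exp (- x) * (x / (q - 1) + x\<^sup>2) \<le> 1 * (x / (q - 1) + x\<^sup>2)"
      by (intro mult_right_mono) auto
    with \<open>x / (q - 1) + x\<^sup>2 \<le> A * x\<close> have P: "exp (- x) * (x / (q - 1) + x\<^sup>2) \<le> A * x"
      by simp
    have sx: "x \<le> sqrt x"
    proof -
      have "sqrt x \<le> 1" using True by simp
      hence "sqrt x * sqrt x \<le> sqrt x * 1" using x by (intro mult_left_mono) auto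
      thus ?thesis using x by simp
    qed
    have ix: "x \<le> 1 / x" using True x by (simp add: field_simps power2_eq_square mult_le_one)
    have b1: "A * x \<le> A * sqrt x" using sx A0 by (intro mult_left_mono) auto
    have b2: "0 \<le> A * sqrt x" using A0 x by simp
    have b3: "A * x \<le> A * (1 / x)" using ix A0 by (intro mult_left_mono) auto
    have b4: "0 \<le> A * (1 / x)" using A0 x by simp
    have c1: "A * x \<le> 27 * A * sqrt x" using b1 b2 by linarith
    have "A * x \<le> 27 * (A * (1 / x))" using b3 b4 by linarith
    hence c2: "A * x \<le> 27 * A / x" by simp
    show ?thesis using P c1 c2 by linarith
  next
    case False
    hence x1: "x > 1" by simp
    have "x \<le> x\<^sup>2" using x1 by (simp add: power2_eq_square)
    hence "x / (q - 1) \<le> x\<^sup>2 / (q - 1)" using q by (intro divide_right_mono) auto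
    hence "x / (q - 1) + x\<^sup>2 \<le> A * x\<^sup>2" by (simp add: A_def distrib_right)
    hence "exp (- x) * (x / (q - 1) + x\<^sup>2) \<le> exp (- x) * (A * x\<^sup>2)"
      using e0 by (intro mult_left_mono) auto
    hence P: "exp (- x) * (x / (q - 1) + x\<^sup>2) \<le> A * (exp (- x) * x\<^sup>2)"
      by (simp add: mult_ac)
    have "x ^ 3 \<le> 27 * exp x" using cube_le_exp[of x] x by simp
    hence "exp (- x) * x\<^sup>2 \<le> 27 / x" using x
      by (simp add: exp_minus field_simps power2_eq_square power3_eq_cube)
    hence "A * (exp (- x) * x\<^sup>2) \<le> A * (27 / x)"
      using A0 by (intro mult_left_mono) auto
    moreover have "A * (27 / x) = 27 * A / x" by simp
    ultimately have P2: "exp (- x) * (x / (q - 1) + x\<^sup>2) \<le> 27 * A / x"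
      using P by linarith
    have "1 / x \<le> sqrt x"
    proof -
      have "1 / x \<le> 1" using x1 by simp
      moreover have "1 \<le> sqrt x" using x1 by simp
      ultimately show ?thesis by linarith
    qed
    hence "(27 * A) * (1 / x) \<le> (27 * A) * sqrt x" using A0
      by (intro mult_left_mono) auto
    hence "27 * A / x \<le> 27 * A * sqrt x" by simp
    thus ?thesis using P2 by linarith
  qed
qed

lemma Hfun_bounds:
  assumes q: "q > 1" and x: "x > 0"
  shows "0 \<le> Hfun q x" "Hfun q x \<le> (27 * q\<^sup>2 * (1 / (q - 1) + 1)) * sqrt x"
    "Hfun q x \<le> (27 * q\<^sup>2 * (1 / (q - 1) + 1)) / x"
proof -
  show "0 \<le> Hfun q x" unfolding Hfun_def using fdef_pos[OF q x] by simp
  have q2: "0 \<le> q\<^sup>2" by simp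
  define P where "P = exp (- x) * (x / (q - 1) + x\<^sup>2)"
  define A where "A = 1 / (q - 1) + 1"
  have HP: "Hfun q x \<le> q\<^sup>2 * P" using Hfun_main[OF q x] by (simp add: P_def)
  have P1: "P \<le> 27 * A * sqrt x" and P2: "P \<le> 27 * A / x"
    using P_bounds[OF q x] by (simp_all add: P_def A_def)
  have "q\<^sup>2 * P \<le> q\<^sup>2 * (27 * A * sqrt x)" using P1 q2 by (rule mult_left_mono)
  thus "Hfun q x \<le> (27 * q\<^sup>2 * (1 / (q - 1) + 1)) * sqrt x"
    using HP by (simp add: A_def mult_ac)
  have "q\<^sup>2 * P \<le> q\<^sup>2 * (27 * A / x)" using P2 q2 by (rule mult_left_mono)
  thus "Hfun q x \<le> (27 * q\<^sup>2 * (1 / (q - 1) + 1)) / x"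
    using HP by (simp add: A_def mult_ac)
qed



lemma nn_integral_infsum_real:
  fixes f :: "'a \<Rightarrow> real"
  assumes "f summable_on A" "\<And>x. x \<in> A \<Longrightarrow> 0 \<le> f x"
  shows "(\<integral>\<^sup>+x. ennreal (f x) \<partial>count_space A) = ennreal (infsum f A)"
proof -
  have "Infinite_Sum.abs_summable_on f A"
    using assms(1) summable_on_iff_abs_summable_on_real by blast
  hence a: "Infinite_Set_Sum.abs_summable_on f A" using abs_summable_equivalent by blast
  show ?thesis
    using nn_integral_conv_infsetsum[OF a assms(2)] infsetsum_infsum[OF a] by simp
qed

lemma measurable_count_space_int:
  fixes f :: "int \<Rightarrow> 'a \<Rightarrow> ennreal"
  assumes "\<And>k. f k \<in> borel_measurable M"
  shows "(\<lambda>x. \<integral>\<^sup>+k. f k x \<partial>count_space UNIV) \<in> borel_measurable M"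
proof -
  have bij: "bij_betw (from_nat_into (UNIV::int set)) UNIV UNIV"
    using bij_betw_from_nat_into[of "UNIV :: int set"] by simp
  have eq: "(\<integral>\<^sup>+k. f k x \<partial>count_space UNIV) = (\<Sum>n. f (from_nat_into UNIV n) x)" for x
    by (simp add: nn_integral_bij_count_space[symmetric, OF bij] nn_integral_count_space_nat)
  show ?thesis unfolding eq using assms by measurable
qed

lemma count_unique_int:
  "(\<integral>\<^sup>+k. indicator {0..<1} (s + real_of_int k) * c \<partial>count_space (UNIV::int set)) = (c::ennreal)"
proof -
  have iff: "s + real_of_int k \<in> {0..<1} \<longleftrightarrow> k = - \<lfloor>s\<rfloor>" for k
  proof -
    have "s + real_of_int k \<in> {0..<1} \<longleftrightarrow> \<lfloor>s + real_of_int k\<rfloor> = 0"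
      unfolding floor_eq_iff by simp
    also have "\<lfloor>s + real_of_int k\<rfloor> = \<lfloor>s\<rfloor> + k" by simp
    finally show ?thesis by linarith
  qed
  have ind: "indicator {0..<1} (s + real_of_int k) = (if k = - \<lfloor>s\<rfloor> then 1 else (0::ennreal))" for k
    unfolding indicator_def using iff[of k] by simp
  have "(\<integral>\<^sup>+k. indicator {0..<1} (s + real_of_int k) * c \<partial>count_space (UNIV::int set))
      = (\<Sum>k\<in>{- \<lfloor>s\<rfloor>}. indicator {0..<1} (s + real_of_int k) * c)"
    by (rule nn_integral_count_space') (auto simp: ind)
  also have "\<dots> = c"
  proof -
    have "0 \<le> s - of_int \<lfloor>s\<rfloor>" "s - of_int \<lfloor>s\<rfloor> < 1" by (simp, linarith)
    thus ?thesis by (simp add: indicator_def)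
  qed
  finally show ?thesis .
qed

lemma core:
  fixes G :: "real \<Rightarrow> real" and q C :: real
  assumes q: "q > 1"
    and G0: "\<And>x. x > 0 \<Longrightarrow> 0 \<le> G x"
    and G1: "\<And>x. x > 0 \<Longrightarrow> G x \<le> C * sqrt x"
    and G2: "\<And>x. x > 0 \<Longrightarrow> G x \<le> C / x"
    and Gc: "continuous_on {0<..} G"
  shows "(\<lambda>t. G (exp t)) integrable_on UNIV"
    and "integral {0..1} (\<lambda>r. \<Sum>\<^sub>\<infinity>k. G (q powr r / q powr real_of_int k))
           = integral UNIV (\<lambda>t. G (exp t)) / ln q"
proof -
  define S where "S r = (\<Sum>\<^sub>\<infinity>k::int. G (q powr r / q powr real_of_int k))" for r
  have lnq: "ln q > 0" using q by simp
  have q0: "q > 0" using q by simp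
  have cont: "continuous_on UNIV (\<lambda>s. G (q powr s))"
    by (rule continuous_on_compose2[OF Gc]) (use q0 in \<open>auto intro!: continuous_intros\<close>)
  have contexp: "continuous_on UNIV (\<lambda>t. G (exp t))"
    by (rule continuous_on_compose2[OF Gc]) (auto intro!: continuous_intros)
  have Fm[measurable]: "(\<lambda>s. G (q powr s)) \<in> borel_measurable borel"
    using cont by (rule borel_measurable_continuous_onI)
  have Em[measurable]: "(\<lambda>t. G (exp t)) \<in> borel_measurable borel"
    using contexp by (rule borel_measurable_continuous_onI)
  have lampos: "q powr r / q powr real_of_int k > 0" for r k using q0 by simp
  have sumS: "(\<lambda>k. G (q powr r / q powr real_of_int k)) summable_on UNIV" for r
    using G_summable(1)[OF q _ G0 G1 G2, of "q powr r"] q0 by simp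
  have S0: "0 \<le> S r" for r
    unfolding S_def by (intro infsum_nonneg G0 lampos)
  have cs: "(\<integral>\<^sup>+k. ennreal (G (q powr r / q powr real_of_int k)) \<partial>count_space UNIV) = ennreal (S r)" for r
    unfolding S_def by (intro nn_integral_infsum_real sumS G0 lampos)
  have pd: "q powr (r - real_of_int k) = q powr r / q powr real_of_int k" for r k
    by (simp add: powr_diff)
  have EQ1: "(\<integral>\<^sup>+s. ennreal (G (q powr s)) \<partial>lborel) = (\<integral>\<^sup>+r. indicator {0..<1} r * ennreal (S r) \<partial>lborel)"
  proof -
    have "(\<integral>\<^sup>+s. ennreal (G (q powr s)) \<partial>lborel)
        = (\<integral>\<^sup>+s. (\<integral>\<^sup>+k. indicator {0..<1} (s + real_of_int k) * ennreal (G (q powr s)) \<partial>count_space UNIV) \<partial>lborel)"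
      by (simp add: count_unique_int)
    also have "\<dots> = (\<integral>\<^sup>+k. (\<integral>\<^sup>+s. indicator {0..<1} (s + real_of_int k) * ennreal (G (q powr s)) \<partial>lborel) \<partial>count_space UNIV)"
      by (rule nn_integral_count_space_nn_integral) auto
    also have "\<dots> = (\<integral>\<^sup>+k. (\<integral>\<^sup>+r. indicator {0..<1} r * ennreal (G (q powr (r - real_of_int k))) \<partial>lborel) \<partial>count_space UNIV)"
    proof (rule nn_integral_cong)
      fix k :: int
      show "(\<integral>\<^sup>+s. indicator {0..<1} (s + real_of_int k) * ennreal (G (q powr s)) \<partial>lborel)
          = (\<integral>\<^sup>+r. indicator {0..<1} r * ennreal (G (q powr (r - real_of_int k))) \<partial>lborel)"
        using nn_integral_real_affine[of "\<lambda>s. indicator {0..<1} (s + real_of_int k) * ennreal (G (q powr s))" 1 "- real_of_int k"]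
        by simp
    qed
    also have "\<dots> = (\<integral>\<^sup>+r. (\<integral>\<^sup>+k. indicator {0..<1} r * ennreal (G (q powr (r - real_of_int k))) \<partial>count_space UNIV) \<partial>lborel)"
      by (rule nn_integral_count_space_nn_integral[symmetric]) auto
    also have "\<dots> = (\<integral>\<^sup>+r. indicator {0..<1} r * ennreal (S r) \<partial>lborel)"
    proof (rule nn_integral_cong)
      fix r :: real
      have "(\<integral>\<^sup>+k. indicator {0..<1} r * ennreal (G (q powr (r - real_of_int k))) \<partial>count_space UNIV)
          = indicator {0..<1} r * (\<integral>\<^sup>+k. ennreal (G (q powr (r - real_of_int k))) \<partial>count_space UNIV)"
        by (rule nn_integral_cmult) simp
      also have "\<dots> = indicator {0..<1} r * ennreal (S r)" by (simp add: pd cs)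
      finally show "(\<integral>\<^sup>+k. indicator {0..<1} r * ennreal (G (q powr (r - real_of_int k))) \<partial>count_space UNIV)
          = indicator {0..<1} r * ennreal (S r)" .
    qed
    finally show ?thesis .
  qed
  have EQ2: "(\<integral>\<^sup>+t. ennreal (G (exp t)) \<partial>lborel) = ennreal (ln q) * (\<integral>\<^sup>+s. ennreal (G (q powr s)) \<partial>lborel)"
  proof -
    have "exp (ln q * x) = q powr x" for x using q0 by (simp add: powr_def mult.commute)
    thus ?thesis
      using nn_integral_real_affine[of "\<lambda>t. ennreal (G (exp t))" "ln q" 0] lnq by simp
  qed
  define M where "M = C * (sqrt q / (1 - 1 / sqrt q) + 1 / (q - 1))"
  have C0: "0 \<le> C" using G0[of 1] G1[of 1] by simp
  have Sb: "S r \<le> M" if r: "r \<in> {0..<1}" for r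
  proof -
    define lam where "lam = q powr r"
    have l1: "1 \<le> lam" using q r by (simp add: lam_def ge_one_powr_ge_zero)
    have l2: "lam \<le> q" using q r powr_mono[of r 1 q] by (simp add: lam_def)
    have sq: "1 / sqrt q < 1" using q by simp
    have "S r \<le> C * (sqrt lam / (1 - 1 / sqrt q) + 1 / (lam * (q - 1)))"
      unfolding S_def lam_def using G_summable(2)[OF q _ G0 G1 G2, of "q powr r"] q0 by simp
    also have "\<dots> \<le> M" unfolding M_def
    proof (intro mult_left_mono C0 add_mono divide_right_mono)
      show "sqrt lam \<le> sqrt q" using l2 by simp
      show "0 \<le> 1 - 1 / sqrt q" using sq by simp
      show "1 / (lam * (q - 1)) \<le> 1 / (q - 1)" using l1 q
        by (intro divide_left_mono) (auto simp: mult_le_cancel_right1)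
    qed
    finally show ?thesis .
  qed
  define X where "X = (\<integral>\<^sup>+r. indicator {0..<1} r * ennreal (S r) \<partial>lborel)"
  have X1: "X \<le> (\<integral>\<^sup>+r. ennreal M * indicator {0..<1::real} r \<partial>lborel)"
    unfolding X_def
  proof (rule nn_integral_mono)
    fix r :: real
    show "indicator {0..<1} r * ennreal (S r) \<le> ennreal M * indicator {0..<1} r"
      by (cases "r \<in> {0..<1}") (auto intro!: Sb ennreal_leI)
  qed
  have X2: "(\<integral>\<^sup>+r. ennreal M * indicator {0..<1::real} r \<partial>lborel) = ennreal M"
    by (subst nn_integral_cmult_indicator) auto
  have "X \<le> ennreal M" using X1 X2 by simp
  hence Xfin: "X < top" using ennreal_less_top[of M] by (rule le_less_trans)
  define E where "E = (\<integral>\<^sup>+t. ennreal (G (exp t)) \<partial>lborel)"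
  have EX: "E = ennreal (ln q) * X" unfolding E_def X_def using EQ1 EQ2 by simp
  obtain x where x: "X = ennreal x" "0 \<le> x" using Xfin by (cases X) auto
  define Phi where "Phi = ln q * x"
  have Phi0: "0 \<le> Phi" using lnq x by (simp add: Phi_def)
  have E: "E = ennreal Phi" using EX x lnq by (simp add: Phi_def ennreal_mult)
  have hasE: "((\<lambda>t. G (exp t)) has_integral Phi) UNIV"
    by (rule nn_integral_has_integral) (use E[unfolded E_def] Phi0 in \<open>auto intro: G0\<close>)
  thus "(\<lambda>t. G (exp t)) integrable_on UNIV" by blast
  have intE: "integral UNIV (\<lambda>t. G (exp t)) = Phi" using hasE by blast
  have Fk[measurable]: "(\<lambda>x. G (q powr x / q powr real_of_int k)) \<in> borel_measurable borel" for k
  proof -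
    have "continuous_on UNIV (\<lambda>x. G (q powr x / q powr real_of_int k))"
      by (rule continuous_on_compose2[OF Gc]) (use q0 in \<open>auto intro!: continuous_intros\<close>)
    thus ?thesis by (rule borel_measurable_continuous_onI)
  qed
  have Sm: "S \<in> borel_measurable borel"
  proof -
    have "S = (\<lambda>r. enn2real (\<integral>\<^sup>+k. ennreal (G (q powr r / q powr real_of_int k)) \<partial>count_space UNIV))"
      by (simp add: cs S0 fun_eq_iff)
    also have "\<dots> \<in> borel_measurable borel"
      by (intro borel_measurable_enn2real measurable_count_space_int) measurable
    finally show ?thesis .
  qed
  have "(\<integral>\<^sup>+r. ennreal (indicator {0..1} r * S r) \<partial>lborel) = X"
    unfolding X_def
    by (intro nn_integral_cong_AE, use AE_lborel_singleton[of "1::real"] in eventually_elim)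
       (auto split: split_indicator)
  also have "X = ennreal (Phi / ln q)" using x lnq by (simp add: Phi_def)
  finally have hint: "((\<lambda>r. indicator {0..1} r * S r) has_integral (Phi / ln q)) UNIV"
    using Sm Phi0 lnq S0 by (intro nn_integral_has_integral) (auto simp: indicator_def)
  have T: "(\<lambda>r. indicator {0..1} r * S r) = (\<lambda>r. if r \<in> {0..1} then S r else 0)"
    by (rule ext) (simp add: indicator_def)
  have "(S has_integral (Phi / ln q)) {0..1}"
    using hint[unfolded T] by (rule has_integral_restrict_UNIV[THEN iffD1])
  hence "integral {0..1} S = Phi / ln q" by blast
  thus "integral {0..1} (\<lambda>r. \<Sum>\<^sub>\<infinity>k. G (q powr r / q powr real_of_int k))
           = integral UNIV (\<lambda>t. G (exp t)) / ln q"
    using intE by (simp add: S_def[abs_def])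
qed



lemma qLL_eq:
  assumes q: "q > 1" shows "qLL q lam k = fdef q (lam / q powr real_of_int k)"
proof -
  have "q powr (real_of_int k - 1) = q powr real_of_int k / q" using q by (simp add: powr_diff)
  thus ?thesis using q by (simp add: qLL_def fdef_def field_simps)
qed

lemma deriv_qLL:
  assumes q: "q > 1" shows "deriv (\<lambda>l. qLL q l k) lam = fd q (lam / q powr real_of_int k) / q powr real_of_int k"
proof -
  define a where "a = q powr real_of_int k"
  have a0: "a > 0" using q by (simp add: a_def)
  have b: "q powr (real_of_int k - 1) = a / q" using q by (simp add: powr_diff a_def)
  have eq: "(\<lambda>l. qLL q l k) = (\<lambda>l. exp ((-1/a) * l) - exp ((-q/a) * l))"
  proof -
    have an: "a \<noteq> 0" "q \<noteq> 0" using a0 q by auto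
    show ?thesis unfolding qLL_def b a_def[symmetric] using an by (simp add: fun_eq_iff field_simps)
  qed
  have "((\<lambda>l. exp ((-1/a) * l) - exp ((-q/a) * l)) has_real_derivative
          (exp ((-1/a) * lam) * (-1/a) - exp ((-q/a) * lam) * (-q/a))) (at lam)"
    using a0 by (auto intro!: derivative_eq_intros)
  hence "deriv (\<lambda>l. qLL q l k) lam = exp ((-1/a) * lam) * (-1/a) - exp ((-q/a) * lam) * (-q/a)"
    unfolding eq by (rule DERIV_imp_deriv)
  also have "\<dots> = fd q (lam / a) / a"
  proof -
    have an: "a \<noteq> 0" "q \<noteq> 0" using a0 q by auto
    have e1: "exp ((-1/a) * lam) = exp (- (lam / a))" by simp
    have e2: "exp ((-q/a) * lam) = exp (- (q * (lam / a)))" by simp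
    show ?thesis unfolding e1 e2 fd_def using an by (simp add: field_simps)
  qed
  finally show ?thesis by (simp add: a_def)
qed

lemma entropy_eq:
  assumes q: "q > 1" shows "entropy (qLL q) lam = (\<Sum>\<^sub>\<infinity>k. gfun q (lam / q powr real_of_int k))"
  unfolding entropy_def gfun_def qLL_eq[OF q] ..

lemma fisher_term:
  assumes q: "q > 1" and lam: "lam > 0"
  shows "(deriv (\<lambda>l. qLL q l k) lam)\<^sup>2 / qLL q lam k = Hfun q (lam / q powr real_of_int k) * (1 / lam\<^sup>2)"
proof -
  define a where "a = q powr real_of_int k"
  have a0: "a > 0" using q by (simp add: a_def)
  show ?thesis unfolding deriv_qLL[OF q] unfolding qLL_eq[OF q] a_def[symmetric] Hfun_def
    using a0 lam by (simp add: field_simps power2_eq_square)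
qed

lemma fisher_eq:
  assumes q: "q > 1" and lam: "lam > 0"
  shows "fisher (qLL q) lam = (\<Sum>\<^sub>\<infinity>k. Hfun q (lam / q powr real_of_int k)) * (1 / lam\<^sup>2)"
  unfolding fisher_def fisher_term[OF q lam] by (rule infsum_cmult_left')

lemma shift_sum:
  assumes q: "q > 1"
  shows "(\<Sum>\<^sub>\<infinity>k. G (q * lam / q powr real_of_int k)) = (\<Sum>\<^sub>\<infinity>k. G (lam / q powr real_of_int k))"
proof -
  have e: "(\<lambda>k. G (q * lam / q powr real_of_int k)) = (\<lambda>k. (\<lambda>j. G (lam / q powr real_of_int j)) (k - 1))"
  proof
    fix k :: int
    have "q powr (real_of_int k - 1) = q powr real_of_int k / q" using q by (simp add: powr_diff)
    hence "lam / q powr real_of_int (k - 1) = q * lam / q powr real_of_int k"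
      using q by simp
    thus "G (q * lam / q powr real_of_int k) = (\<lambda>j. G (lam / q powr real_of_int j)) (k - 1)"
      by simp
  qed
  have "(\<Sum>\<^sub>\<infinity>k. G (q * lam / q powr real_of_int k)) = (\<Sum>\<^sub>\<infinity>k. (\<lambda>j. G (lam / q powr real_of_int j)) (k - 1))"
    by (simp only: e)
  also have "\<dots> = (\<Sum>\<^sub>\<infinity>k. G (lam / q powr real_of_int k))"
    by (rule infsum_reindex_bij_betw) (rule bij_betwI[of _ _ _ "\<lambda>k. k + 1"], auto)
  finally show ?thesis .
qed

lemma fdef_cont: "continuous_on S (fdef q)"
  unfolding fdef_def by (intro continuous_intros)

lemma gfun_cont: assumes q: "q > 1" shows "continuous_on {0<..} (gfun q)"
proof -
  have "continuous_on {0<..} (\<lambda>x. - fdef q x * log 2 (fdef q x))"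
  proof -
    have fnz: "fdef q x \<noteq> 0" "0 < fdef q x" if "x > 0" for x using fdef_pos[OF q that] by simp_all
    show ?thesis using fnz by (intro continuous_intros fdef_cont) auto
  qed
  thus ?thesis unfolding gfun_def .
qed

lemma Hfun_cont: assumes q: "q > 1" shows "continuous_on {0<..} (Hfun q)"
proof -
  have "continuous_on {0<..} (\<lambda>x. (x * (- exp (- x) + q * exp (- (q * x))))\<^sup>2 / fdef q x)"
  proof -
    have fnz: "fdef q x \<noteq> 0" if "x > 0" for x using fdef_pos[OF q that] by simp
    show ?thesis using fnz by (intro continuous_intros fdef_cont) auto
  qed
  thus ?thesis unfolding Hfun_def fd_def .
qed



theorem mainTheorem4:
  fixes q :: real
  assumes "q > 1"
  shows "weakly_scale_invariant (qLL q) q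
     \<and> (\<forall>lam>0. (\<lambda>k. - qLL q lam k * log 2 (qLL q lam k)) summable_on UNIV
               \<and> (\<lambda>k. (deriv (\<lambda>l. qLL q l k) lam)\<^sup>2 / qLL q lam k) summable_on UNIV)
     \<and> phi_integrand q integrable_on UNIV
     \<and> rho_integrand q integrable_on UNIV
     \<and> scaled_entropy (qLL q) q = phi q / ln q
     \<and> scaled_fisher (qLL q) q = rho q / ln q"
proof -
  have q: "q > 1" by fact
  have q0: "q > 0" using q by simp
  note gb = gfun_bounds[OF q]
  note hb = Hfun_bounds[OF q]
  have gsum: "(\<lambda>k. gfun q (lam / q powr real_of_int k)) summable_on UNIV" if "lam > 0" for lam
    by (rule G_summable(1)[OF q that]) (auto intro: gb)
  have hsum: "(\<lambda>k. Hfun q (lam / q powr real_of_int k)) summable_on UNIV" if "lam > 0" for lam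
    by (rule G_summable(1)[OF q that]) (auto intro: hb)
  note gcore = core[OF q, of "gfun q", OF gb(1) gb(2) gb(3) gfun_cont[OF q]]
  note hcore = core[OF q, of "Hfun q", OF hb(1) hb(2) hb(3) Hfun_cont[OF q]]
  have phiI: "phi_integrand q = (\<lambda>t. gfun q (exp t))"
    by (simp add: fun_eq_iff phi_integrand_def gfun_def fdef_def)
  have rhoI: "rho_integrand q = (\<lambda>t. Hfun q (exp t))"
    by (simp add: fun_eq_iff rho_integrand_def Hfun_def fdef_def fd_def algebra_simps)
  have wsi: "weakly_scale_invariant (qLL q) q"
    unfolding weakly_scale_invariant_def
  proof (intro conjI allI impI q)
    fix lam :: real assume lam: "lam > 0"
    show "entropy (qLL q) lam = entropy (qLL q) (q * lam)"
      unfolding entropy_eq[OF q] shift_sum[OF q] ..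
    show "fisher (qLL q) lam = q\<^sup>2 * fisher (qLL q) (q * lam)"
      unfolding fisher_eq[OF q lam] fisher_eq[OF q mult_pos_pos[OF q0 lam]] shift_sum[OF q]
      using q lam by (simp add: field_simps power2_eq_square)
  qed
  have summ: "\<forall>lam>0. (\<lambda>k. - qLL q lam k * log 2 (qLL q lam k)) summable_on UNIV
               \<and> (\<lambda>k. (deriv (\<lambda>l. qLL q l k) lam)\<^sup>2 / qLL q lam k) summable_on UNIV"
  proof (intro allI impI conjI)
    fix lam :: real assume lam: "lam > 0"
    show "(\<lambda>k. - qLL q lam k * log 2 (qLL q lam k)) summable_on UNIV"
      using gsum[OF lam] by (simp add: qLL_eq[OF q] gfun_def)
    show "(\<lambda>k. (deriv (\<lambda>l. qLL q l k) lam)\<^sup>2 / qLL q lam k) summable_on UNIV"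
      unfolding fisher_term[OF q lam] by (intro summable_on_cmult_left hsum lam)
  qed
  have se: "scaled_entropy (qLL q) q = phi q / ln q"
    unfolding scaled_entropy_def entropy_eq[OF q] phi_def phiI by (rule gcore(2))
  have sf: "scaled_fisher (qLL q) q = rho q / ln q"
  proof -
    have "(\<lambda>r. q powr (2 * r) * fisher (qLL q) (q powr r))
        = (\<lambda>r. \<Sum>\<^sub>\<infinity>k. Hfun q (q powr r / q powr real_of_int k))"
    proof
      fix r :: real
      have p: "q powr (2 * r) = (q powr r)\<^sup>2"
        by (simp add: power2_eq_square powr_add[symmetric])
      show "q powr (2 * r) * fisher (qLL q) (q powr r) = (\<Sum>\<^sub>\<infinity>k. Hfun q (q powr r / q powr real_of_int k))"
      proof -
        have pr: "0 < q powr r" using q0 by simp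
        show ?thesis unfolding fisher_eq[OF q pr] p using pr by simp
      qed
    qed
    thus ?thesis unfolding scaled_fisher_def rho_def rhoI using hcore(2) by simp
  qed
  show ?thesis using wsi summ se sf gcore(1) hcore(1) phiI rhoI by simp
qed


end
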